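(* Let $G^{\rm hol}_{\mathbb C}:=\exp(\tfrac{\pi i}{2}h)\,G^{\rm cut}_{\mathbb C}\,\exp(\tfrac{\pi i}{2}h)\subseteq G_{\mathbb C}$. Then $G^{\rm hol}_{\mathbb C}$ is invariant under complex conjugation $g\mapsto\overline g$, under inversion $g\mapsto g^{-1}$, and under conjugation $g\mapsto\exp(\pi ih)g\exp(-\pi ih)$, and $$G^{\rm hol}_{\mathbb C}=H_{\mathbb C}\exp(\mathcal S_\pi h)\,G\,\exp(\mathcal S_\pi h)H_{\mathbb C}=H_{\mathbb C}\exp(-\mathcal S_\pi h)\,G\,\exp(-\mathcal S_\pi h)H_{\mathbb C},$$ where $\mathcal S_\pi=\{\zeta\in\mathbb C:0<\mathrm{Im}\,\zeta<\pi\}$.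
   Context: Let $d\ge1$, $\beta(z,w)=z_0w_0-z_1w_1-\dots-z_dw_d$ on $\mathbb C^{1+d}$, $G=\mathrm{SO}_{1,d}(\mathbb R)_e$, $G_{\mathbb C}=\mathrm{SO}_{1+d}(\mathbb C)$ (determinant-one complex linear maps preserving $\beta$), $\overline g$ entrywise complex conjugation, $K_{\mathbb C}=\{g\in G_{\mathbb C}:ge_0=e_0\}$, $H_{\mathbb C}=\{g\in G_{\mathbb C}:ge_1=e_1\}$. Let $h(z_0,z_1,z_2,\dots)=(z_1,z_0,0,\dots,0)$, $\Xi_{A_{\mathbb C}}=\exp(\{\zeta:|\mathrm{Im}\,\zeta|<\pi/2\}h)$, and $G^{\rm cut}_{\mathbb C}=K_{\mathbb C}\,\Xi_{A_{\mathbb C}}\,G\,\Xi_{A_{\mathbb C}}\,K_{\mathbb C}$. *)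

theory Defs
  imports "HOL-Analysis.Analysis"
begin

text \<open>Matrices are of type complex^'n^'n (rows indexed first). The index type 'n
 has CARD('n) = 1 + d elements; two distinct indices i0, i1 play the roles of the
 basis vectors e_0 and e_1.\<close>

definition beta :: "'n::finite \<Rightarrow> complex^'n \<Rightarrow> complex^'n \<Rightarrow> complex" where
  "beta i0 z w = z$i0 * w$i0 - (\<Sum>k\<in>UNIV - {i0}. z$k * w$k)"

definition beta_real :: "'n::finite \<Rightarrow> real^'n \<Rightarrow> real^'n \<Rightarrow> real" where
  "beta_real i0 z w = z$i0 * w$i0 - (\<Sum>k\<in>UNIV - {i0}. z$k * w$k)"

definition GC :: "'n::finite \<Rightarrow> (complex^'n^'n) set" where
  "GC i0 = {g. det g = 1 \<and> (\<forall>z w. beta i0 (g *v z) (g *v w) = beta i0 z w)}"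

definition SOR :: "'n::finite \<Rightarrow> (real^'n^'n) set" where
  "SOR i0 = {g. det g = 1 \<and> (\<forall>z w. beta_real i0 (g *v z) (g *v w) = beta_real i0 z w)}"

definition cmat :: "real^'n^'m \<Rightarrow> complex^'n^'m" where
  "cmat A = (\<chi> i j. complex_of_real (A$i$j))"

definition Greal :: "'n::finite \<Rightarrow> (complex^'n^'n) set" where
  "Greal i0 = cmat ` connected_component_set (SOR i0) (mat 1)"

definition KC :: "'n::finite \<Rightarrow> (complex^'n^'n) set" where
  "KC i0 = {g \<in> GC i0. g *v axis i0 1 = axis i0 1}"

definition HC :: "'n::finite \<Rightarrow> 'n \<Rightarrow> (complex^'n^'n) set" where
  "HC i0 i1 = {g \<in> GC i0. g *v axis i1 1 = axis i1 1}"

definition mcnj :: "complex^'n^'m \<Rightarrow> complex^'n^'m" where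
  "mcnj g = (\<chi> i j. cnj (g$i$j))"

definition smat :: "complex \<Rightarrow> complex^'n^'m \<Rightarrow> complex^'n^'m" where
  "smat c A = (\<chi> i j. c * A$i$j)"

definition hmat :: "'n::finite \<Rightarrow> 'n \<Rightarrow> complex^'n^'n" where
  "hmat i0 i1 = (\<chi> i j. if (i = i0 \<and> j = i1) \<or> (i = i1 \<and> j = i0) then 1 else 0)"

fun mpow :: "complex^'n^'n \<Rightarrow> nat \<Rightarrow> complex^'n^'n" where
  "mpow A 0 = mat 1"
| "mpow A (Suc k) = A ** mpow A k"

definition mexp :: "complex^'n^'n \<Rightarrow> complex^'n^'n" where
  "mexp A = (\<Sum>k. inverse (fact k) *\<^sub>R mpow A k)"

definition setmul :: "(complex^'n^'n) set \<Rightarrow> (complex^'n^'n) set \<Rightarrow> (complex^'n^'n) set"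
  (infixl "\<cdot>\<cdot>" 70) where
  "A \<cdot>\<cdot> B = {a ** b | a b. a \<in> A \<and> b \<in> B}"

definition XiA :: "'n::finite \<Rightarrow> 'n \<Rightarrow> (complex^'n^'n) set" where
  "XiA i0 i1 = {mexp (smat \<zeta> (hmat i0 i1)) | \<zeta>. \<bar>Im \<zeta>\<bar> < pi / 2}"

definition Gcut :: "'n::finite \<Rightarrow> 'n \<Rightarrow> (complex^'n^'n) set" where
  "Gcut i0 i1 = KC i0 \<cdot>\<cdot> XiA i0 i1 \<cdot>\<cdot> Greal i0 \<cdot>\<cdot> XiA i0 i1 \<cdot>\<cdot> KC i0"

definition Ghol :: "'n::finite \<Rightarrow> 'n \<Rightarrow> (complex^'n^'n) set" where
  "Ghol i0 i1 = {mexp (smat (pi * \<i> / 2) (hmat i0 i1))} \<cdot>\<cdot> Gcut i0 i1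
                 \<cdot>\<cdot> {mexp (smat (pi * \<i> / 2) (hmat i0 i1))}"

definition Spi :: "complex set" where
  "Spi = {\<zeta>. 0 < Im \<zeta> \<and> Im \<zeta> < pi}"

definition expS :: "'n::finite \<Rightarrow> 'n \<Rightarrow> complex set \<Rightarrow> (complex^'n^'n) set" where
  "expS i0 i1 S = {mexp (smat \<zeta> (hmat i0 i1)) | \<zeta>. \<zeta> \<in> S}"

end

theory Submission
  imports Defs
begin


definition FF :: "'n::finite \<Rightarrow> 'n \<Rightarrow> complex \<Rightarrow> complex \<Rightarrow> complex \<Rightarrow> complex^'n^'n" where
 "FF i0 i1 a b c = (\<chi> i j. if i \<in> {i0,i1} \<and> j \<in> {i0,i1} then (if i = j then (a+b)/2 else (a-b)/2)
     else if i = j then c else 0)"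

lemma sum_split2:
  fixes f :: "'n::finite \<Rightarrow> complex"
  assumes "i0 \<noteq> i1"
  shows "(\<Sum>k\<in>UNIV. f k) = f i0 + f i1 + (\<Sum>k\<in>UNIV-{i0,i1}. f k)"
proof -
  have "(\<Sum>k\<in>UNIV. f k) = (\<Sum>k\<in>{i0,i1}. f k) + (\<Sum>k\<in>UNIV-{i0,i1}. f k)"
    using sum.subset_diff[of "{i0,i1}" UNIV f] by (simp add: add.commute)
  then show ?thesis using assms by simp
qed

lemma FF_mult:
  assumes "i0 \<noteq> i1"
  shows "FF i0 i1 a b c ** FF i0 i1 a' b' c' = FF i0 i1 (a*a') (b*b') (c*c')"
proof -
  have "(FF i0 i1 a b c ** FF i0 i1 a' b' c') $ i $ j = FF i0 i1 (a*a') (b*b') (c*c') $ i $ j" for i j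
  proof (cases "i \<in> {i0,i1}")
    case True
    have z: "(\<Sum>k\<in>UNIV-{i0,i1}. FF i0 i1 a b c $ i $ k * FF i0 i1 a' b' c' $ k $ j) = 0"
      by (rule sum.neutral) (use True in \<open>auto simp: FF_def\<close>)
    have e: "(FF i0 i1 a b c ** FF i0 i1 a' b' c') $ i $ j = 
       FF i0 i1 a b c $ i $ i0 * FF i0 i1 a' b' c' $ i0 $ j + FF i0 i1 a b c $ i $ i1 * FF i0 i1 a' b' c' $ i1 $ j"
      unfolding matrix_matrix_mult_def 
      by (simp only: vec_lambda_beta sum_split2[OF assms] z) simp
    show ?thesis unfolding e
    proof (cases "j \<in> {i0,i1}")
      case True
      with \<open>i \<in> {i0,i1}\<close> assms consider "i = i0" "j = i0" | "i = i0" "j = i1" | "i = i1" "j = i0" | "i = i1" "j = i1"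
        by blast
      then show "FF i0 i1 a b c $ i $ i0 * FF i0 i1 a' b' c' $ i0 $ j + FF i0 i1 a b c $ i $ i1 * FF i0 i1 a' b' c' $ i1 $ j = FF i0 i1 (a*a') (b*b') (c*c') $ i $ j"
        by cases (simp_all add: FF_def assms assms[symmetric] field_simps)
    next
      case False
      then show "FF i0 i1 a b c $ i $ i0 * FF i0 i1 a' b' c' $ i0 $ j + FF i0 i1 a b c $ i $ i1 * FF i0 i1 a' b' c' $ i1 $ j = FF i0 i1 (a*a') (b*b') (c*c') $ i $ j"
        using \<open>i \<in> {i0,i1}\<close> by (auto simp add: FF_def)
    qed
  next
    case False
    have "(\<Sum>k\<in>UNIV. FF i0 i1 a b c $ i $ k * FF i0 i1 a' b' c' $ k $ j)
        = (\<Sum>k\<in>UNIV. if k = i then c * FF i0 i1 a' b' c' $ i $ j else 0)"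
      by (rule sum.cong) (use False in \<open>auto simp: FF_def\<close>)
    also have "\<dots> = c * FF i0 i1 a' b' c' $ i $ j" by simp
    finally show ?thesis unfolding matrix_matrix_mult_def using False
      by (auto simp: FF_def)
  qed
  then show ?thesis by (simp add: vec_eq_iff)
qed


lemma FF_tendsto:
  assumes "(A \<longlongrightarrow> a) F" "(B \<longlongrightarrow> b) F" "(C \<longlongrightarrow> c) F"
  shows "((\<lambda>n. FF i0 i1 (A n) (B n) (C n)) \<longlongrightarrow> FF i0 i1 a b c) F"
  apply (rule vec_tendstoI, rule vec_tendstoI)
  apply (simp add: FF_def)
  using assms by (auto intro!: tendsto_intros)

lemma FF_sum:
  assumes "finite S"
  shows "(\<Sum>k\<in>S. FF i0 i1 (A k) (B k) (C k)) = FF i0 i1 (\<Sum>k\<in>S. A k) (\<Sum>k\<in>S. B k) (\<Sum>k\<in>S. C k)"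
  by (simp add: vec_eq_iff FF_def sum_divide_distrib[symmetric] sum.distrib sum_subtractf)

lemma FF_sums:
  assumes "A sums a" "B sums b" "C sums c"
  shows "(\<lambda>n. FF i0 i1 (A n) (B n) (C n)) sums FF i0 i1 a b c"
  using assms unfolding sums_def by (simp add: FF_sum FF_tendsto)

lemma FF_scaleR: "r *\<^sub>R FF i0 i1 a b c = FF i0 i1 (r *\<^sub>R a) (r *\<^sub>R b) (r *\<^sub>R c)"
  unfolding vec_eq_iff FF_def vector_scaleR_component vec_lambda_beta
  by (auto simp: scaleR_conv_of_real field_simps)

lemma FF_one:
  assumes "i0 \<noteq> i1"
  shows "mat 1 = FF i0 i1 1 1 1"
  using assms by (auto simp: vec_eq_iff FF_def mat_def)

lemma FF_h:
  assumes "i0 \<noteq> i1"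
  shows "smat z (hmat i0 i1) = FF i0 i1 z (-z) 0"
  using assms by (auto simp: vec_eq_iff FF_def smat_def hmat_def)

lemma FF_mpow:
  assumes "i0 \<noteq> i1"
  shows "mpow (FF i0 i1 a b c) k = FF i0 i1 (a^k) (b^k) (c^k)"
  by (induction k) (simp_all add: FF_one[OF assms] FF_mult[OF assms])

lemma mexp_h:
  assumes "i0 \<noteq> i1"
  shows "mexp (smat z (hmat i0 i1)) = FF i0 i1 (exp z) (exp (-z)) 1"
proof -
  have "(\<lambda>k. inverse (fact k) *\<^sub>R mpow (smat z (hmat i0 i1)) k) sums FF i0 i1 (exp z) (exp (-z)) 1"
    unfolding FF_h[OF assms] FF_mpow[OF assms] FF_scaleR
  proof (rule FF_sums)
    show "(\<lambda>n. inverse (fact n) *\<^sub>R z ^ n) sums exp z"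
      using exp_converges[of z] by (simp add: divide_inverse_commute field_class.field_divide_inverse scaleR_conv_of_real)
    show "(\<lambda>n. inverse (fact n) *\<^sub>R (- z) ^ n) sums exp (-z)"
      using exp_converges[of "-z"] by (simp add: divide_inverse_commute field_class.field_divide_inverse scaleR_conv_of_real)
    show "(\<lambda>n. inverse (fact n) *\<^sub>R (0::complex) ^ n) sums 1"
      using exp_converges[of "0::complex"] by (simp add: divide_inverse_commute field_class.field_divide_inverse scaleR_conv_of_real)
  qed
  then show ?thesis unfolding mexp_def by (rule sums_unique[symmetric])
qed


lemma exp_pih: "exp (complex_of_real pi * \<i> / 2) = \<i>"
  by (simp add: exp_eq_polar cis.ctr complex_eq_iff)
lemma exp_mpih: "exp (- (complex_of_real pi * \<i> / 2)) = - \<i>"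
  by (simp add: exp_eq_polar cis.ctr complex_eq_iff)
lemma exp_pi: "exp (complex_of_real pi * \<i>) = - 1"
  by (simp add: exp_eq_polar cis.ctr complex_eq_iff)
lemma exp_mpi: "exp (- (complex_of_real pi * \<i>)) = - 1"
  by (simp add: exp_eq_polar cis.ctr complex_eq_iff)



definition sg :: "'n \<Rightarrow> 'n \<Rightarrow> complex" where "sg i0 k = (if k = i0 then 1 else -1)"
definition sgr :: "'n \<Rightarrow> 'n \<Rightarrow> real" where "sgr i0 k = (if k = i0 then 1 else -1)"
definition Qc :: "'n::finite \<Rightarrow> complex^'n^'n \<Rightarrow> 'n \<Rightarrow> 'n \<Rightarrow> complex" where
  "Qc i0 g a b = (\<Sum>k\<in>UNIV. sg i0 k * g$k$a * g$k$b)"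

lemma beta_alt: "beta i0 z w = (\<Sum>k\<in>UNIV. sg i0 k * z$k * w$k)"
proof -
  have "(\<Sum>k\<in>UNIV. sg i0 k * z$k * w$k) = sg i0 i0 * z$i0 * w$i0 + (\<Sum>k\<in>UNIV-{i0}. sg i0 k * z$k * w$k)"
    by (simp add: sum.remove)
  also have "(\<Sum>k\<in>UNIV-{i0}. sg i0 k * z$k * w$k) = (\<Sum>k\<in>UNIV-{i0}. - (z$k * w$k))"
    by (rule sum.cong) (auto simp: sg_def)
  finally show ?thesis by (simp add: beta_def sg_def sum_negf)
qed

lemma beta_real_alt: "beta_real i0 z w = (\<Sum>k\<in>UNIV. sgr i0 k * z$k * w$k)"
proof -
  have "(\<Sum>k\<in>UNIV. sgr i0 k * z$k * w$k) = sgr i0 i0 * z$i0 * w$i0 + (\<Sum>k\<in>UNIV-{i0}. sgr i0 k * z$k * w$k)"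
    by (simp add: sum.remove)
  also have "(\<Sum>k\<in>UNIV-{i0}. sgr i0 k * z$k * w$k) = (\<Sum>k\<in>UNIV-{i0}. - (z$k * w$k))"
    by (rule sum.cong) (auto simp: sgr_def)
  finally show ?thesis by (simp add: beta_real_def sgr_def sum_negf)
qed

lemma Qpres:
  assumes Q: "\<And>a b. Qc i0 g a b = (if a = b then sg i0 a else 0)"
  shows "beta i0 (g *v z) (g *v w) = beta i0 z w"
proof -
  have "beta i0 (g *v z) (g *v w) = (\<Sum>k\<in>UNIV. \<Sum>a\<in>UNIV. \<Sum>b\<in>UNIV. sg i0 k * g$k$a * g$k$b * (z$a * w$b))"
    by (simp add: beta_alt matrix_vector_mult_def sum_distrib_left sum_distrib_right mult_ac)
  also have "\<dots> = (\<Sum>a\<in>UNIV. \<Sum>k\<in>UNIV. \<Sum>b\<in>UNIV. sg i0 k * g$k$a * g$k$b * (z$a * w$b))"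
    by (rule sum.swap)
  also have "\<dots> = (\<Sum>a\<in>UNIV. \<Sum>b\<in>UNIV. \<Sum>k\<in>UNIV. sg i0 k * g$k$a * g$k$b * (z$a * w$b))"
    by (rule sum.cong[OF refl], rule sum.swap)
  also have "\<dots> = (\<Sum>a\<in>UNIV. \<Sum>b\<in>UNIV. Qc i0 g a b * (z$a * w$b))"
    by (simp add: Qc_def sum_distrib_right)
  also have "\<dots> = (\<Sum>a\<in>UNIV. \<Sum>b\<in>UNIV. if b = a then sg i0 a * z$a * w$a else 0)"
    by (rule sum.cong[OF refl], rule sum.cong[OF refl]) (auto simp: Q)
  also have "\<dots> = (\<Sum>a\<in>UNIV. sg i0 a * z$a * w$a)"
    by simp
  finally show ?thesis by (simp add: beta_alt)
qed

lemma Qdet: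
  fixes g :: "complex^'n::finite^'n" and i0 :: 'n
  assumes Q: "\<And>a b. Qc i0 g a b = (if a = b then sg i0 a else 0)"
  shows "det g * det g = 1"
proof -
  define D :: "complex^'n^'n" where "D = (\<chi> a b. if a = b then sg i0 a else 0)"
  have eq: "(transpose g ** D ** g) $ a $ b = Qc i0 g a b" for a b
    by (simp add: matrix_matrix_mult_def D_def transpose_def Qc_def if_distrib
      sum_distrib_right mult_ac cong: if_cong)
  have "transpose g ** D ** g = D"
    unfolding vec_eq_iff eq Q by (simp add: D_def)
  then have "det g * det D * det g = det D" by (metis det_mul det_transpose)
  moreover have "det D \<noteq> 0"
    by (subst det_diagonal) (auto simp: D_def sg_def)
  ultimately show ?thesis by (metis mult.commute mult.assoc mult_cancel_right2 mult_1)
qed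



lemma Q_FF:
  assumes n: "i0 \<noteq> i1" and ab: "a * b = 1"
  shows "Qc i0 (FF i0 i1 a b 1) x y = (if x = y then sg i0 x else 0)"
proof -
  let ?F = "FF i0 i1 a b 1"
  have r: "(\<Sum>k\<in>UNIV-{i0,i1}. sg i0 k * ?F$k$x * ?F$k$y)
      = (\<Sum>k\<in>UNIV-{i0,i1}. if k = x then (if x = y then -1 else 0) else 0)"
    by (rule sum.cong) (auto simp: FF_def sg_def)
  have "Qc i0 ?F x y = ?F$i0$x * ?F$i0$y - ?F$i1$x * ?F$i1$y
     + (if x \<in> UNIV-{i0,i1} then (if x = y then -1 else 0) else 0)"
    unfolding Qc_def sum_split2[OF n] r using n by (simp add: sg_def)
  also have "\<dots> = (if x = y then sg i0 x else 0)"
  proof -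
    have p: "((a+b)/2)^2 - ((a-b)/2)^2 = 1" using ab by (simp add: field_simps power2_eq_square)
    consider "x = i0" | "x = i1" | "x \<notin> {i0,i1}" by blast
    then show ?thesis
    proof cases
      case 1
      then show ?thesis using n p
        by (cases "y = i0"; cases "y = i1") (auto simp: FF_def sg_def power2_eq_square field_simps)
    next
      case 2
      then show ?thesis using n p
        by (cases "y = i0"; cases "y = i1") (auto simp: FF_def sg_def power2_eq_square field_simps)
    next
      case 3
      then show ?thesis using n
        by (auto simp: FF_def sg_def)
    qed
  qed
  finally show ?thesis .
qed

definition Mx :: "'n::finite \<Rightarrow> 'n \<Rightarrow> complex \<Rightarrow> complex^'n^'n" where
  "Mx i0 i1 z = FF i0 i1 (exp z) (exp (-z)) 1"

lemma Mx_mult: "i0 \<noteq> i1 \<Longrightarrow> Mx i0 i1 a ** Mx i0 i1 b = Mx i0 i1 (a + b)"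
  by (simp add: Mx_def FF_mult exp_add[symmetric] add.commute)

lemma Mx_0: "i0 \<noteq> i1 \<Longrightarrow> Mx i0 i1 0 = mat 1"
  by (simp add: Mx_def FF_one)

lemma Mx_Q: "i0 \<noteq> i1 \<Longrightarrow> Qc i0 (Mx i0 i1 z) x y = (if x = y then sg i0 x else 0)"
  unfolding Mx_def by (rule Q_FF) (simp_all add: exp_minus)

lemma Mx_det: assumes "i0 \<noteq> i1" shows "det (Mx i0 i1 z) = 1"
proof -
  have d: "det (Mx i0 i1 (z/2)) * det (Mx i0 i1 (z/2)) = 1"
    by (rule Qdet) (rule Mx_Q[OF assms])
  have "Mx i0 i1 z = Mx i0 i1 (z/2) ** Mx i0 i1 (z/2)" by (simp add: Mx_mult[OF assms])
  then have "det (Mx i0 i1 z) = det (Mx i0 i1 (z/2)) * det (Mx i0 i1 (z/2))" by (simp add: det_mul)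
  with d show ?thesis by simp
qed

lemma Mx_GC: "i0 \<noteq> i1 \<Longrightarrow> Mx i0 i1 z \<in> GC i0"
  unfolding GC_def by (auto simp: Mx_det intro!: Qpres Mx_Q)

lemma mexp_Mx: "i0 \<noteq> i1 \<Longrightarrow> mexp (smat z (hmat i0 i1)) = Mx i0 i1 z"
  by (simp add: mexp_h Mx_def)



lemma inv_unique:
  fixes A B :: "'a::field^'n^'n"
  assumes "A ** B = mat 1"
  shows "matrix_inv A = B"
proof -
  have BA: "B ** A = mat 1" using assms matrix_left_right_inverse by blast
  have "\<exists>A'. A ** A' = mat 1 \<and> A' ** A = mat 1" using assms BA by blast
  then have s: "A ** matrix_inv A = mat 1 \<and> matrix_inv A ** A = mat 1"
    unfolding matrix_inv_def by (rule someI_ex)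
  have "matrix_inv A = matrix_inv A ** (A ** B)" by (simp add: assms)
  also have "\<dots> = B" by (simp add: matrix_mul_assoc s)
  finally show ?thesis .
qed

lemma inv_unique_left:
  fixes A B :: "'a::field^'n^'n"
  assumes "B ** A = mat 1"
  shows "matrix_inv A = B"
  using assms inv_unique matrix_left_right_inverse by blast

lemma inv_props:
  fixes A :: "'a::field^'n^'n"
  assumes "det A \<noteq> 0"
  shows "A ** matrix_inv A = mat 1" "matrix_inv A ** A = mat 1"
proof -
  have "invertible A" using assms invertible_det_nz by blast
  then have "\<exists>A'. A ** A' = mat 1 \<and> A' ** A = mat 1" unfolding invertible_def by blast
  then have s: "A ** matrix_inv A = mat 1 \<and> matrix_inv A ** A = mat 1"
    unfolding matrix_inv_def by (rule someI_ex)
  then show "A ** matrix_inv A = mat 1" "matrix_inv A ** A = mat 1" by auto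
qed

lemma GC_mult: "g \<in> GC i0 \<Longrightarrow> h \<in> GC i0 \<Longrightarrow> g ** h \<in> GC i0"
  by (simp add: GC_def det_mul matrix_vector_mul_assoc[symmetric])

lemma GC_one: "mat 1 \<in> GC i0"
  by (simp add: GC_def)

lemma GC_inv_props:
  assumes "g \<in> GC i0"
  shows "g ** matrix_inv g = mat 1" "matrix_inv g ** g = mat 1"
  using assms inv_props[of g] by (auto simp: GC_def)

lemma GC_inv: assumes "g \<in> GC i0" shows "matrix_inv g \<in> GC i0"
proof -
  note p = GC_inv_props[OF assms]
  have "det g * det (matrix_inv g) = 1" using p(1) by (metis det_I det_mul)
  then have d: "det (matrix_inv g) = 1" using assms by (simp add: GC_def)
  have "beta i0 (matrix_inv g *v z) (matrix_inv g *v w) = beta i0 z w" for z w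
  proof -
    have "beta i0 (matrix_inv g *v z) (matrix_inv g *v w) = beta i0 (g *v (matrix_inv g *v z)) (g *v (matrix_inv g *v w))"
      using assms by (simp add: GC_def)
    also have "\<dots> = beta i0 z w" by (simp add: matrix_vector_mul_assoc p)
    finally show ?thesis .
  qed
  then show ?thesis using d by (simp add: GC_def)
qed

definition vcnj :: "complex^'n \<Rightarrow> complex^'n" where "vcnj z = (\<chi> i. cnj (z$i))"

lemma mcnj_mult: "mcnj (A ** B) = mcnj A ** mcnj B"
  by (simp add: vec_eq_iff mcnj_def matrix_matrix_mult_def)

lemma mcnj_mcnj: "mcnj (mcnj A) = A"
  by (simp add: vec_eq_iff mcnj_def)

lemma det_mcnj: "det (mcnj g) = cnj (det g)"
  by (simp add: det_def mcnj_def)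

lemma mcnj_mv: "mcnj g *v z = vcnj (g *v vcnj z)"
  by (simp add: vec_eq_iff mcnj_def vcnj_def matrix_vector_mult_def)

lemma beta_vcnj: "beta i0 (vcnj z) (vcnj w) = cnj (beta i0 z w)"
  by (simp add: beta_def vcnj_def)

lemma vcnj_vcnj: "vcnj (vcnj z) = z" by (simp add: vec_eq_iff vcnj_def)

lemma GC_mcnj: assumes "g \<in> GC i0" shows "mcnj g \<in> GC i0"
proof -
  have "beta i0 (mcnj g *v z) (mcnj g *v w) = beta i0 z w" for z w
  proof -
    have "beta i0 (mcnj g *v z) (mcnj g *v w) = cnj (beta i0 (g *v vcnj z) (g *v vcnj w))"
      by (simp add: mcnj_mv beta_vcnj)
    also have "\<dots> = cnj (beta i0 (vcnj z) (vcnj w))" using assms by (simp add: GC_def)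
    also have "\<dots> = beta i0 z w" by (simp add: beta_vcnj)
    finally show ?thesis .
  qed
  then show ?thesis using assms by (simp add: GC_def det_mcnj)
qed

lemma vcnj_axis: "vcnj (axis i 1) = axis i 1"
  by (simp add: vec_eq_iff vcnj_def axis_def)

lemma mcnj_axis: "g *v axis i 1 = axis i 1 \<Longrightarrow> mcnj g *v axis i 1 = axis i 1"
  by (simp add: mcnj_mv vcnj_axis)

lemma cmat_mult: "cmat (A ** B) = cmat A ** cmat B"
  by (simp add: vec_eq_iff cmat_def matrix_matrix_mult_def)

lemma cmat_one: "cmat (mat 1) = mat 1"
  by (simp add: vec_eq_iff cmat_def mat_def)

lemma mcnj_cmat: "mcnj (cmat A) = cmat A"
  by (simp add: vec_eq_iff cmat_def mcnj_def)

lemma det_cmat: "det (cmat g) = of_real (det g)"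
  by (simp add: det_def cmat_def)

lemma mv_axis: "(A *v axis a 1) $ k = (A $ k $ a :: 'a::semiring_1)"
proof -
  have "(\<Sum>j\<in>UNIV. A $ k $ j * axis a 1 $ j) = (\<Sum>j\<in>UNIV. if j = a then A $ k $ a else 0)"
    by (rule sum.cong) (auto simp: axis_def)
  then show ?thesis by (simp add: matrix_vector_mult_def)
qed

lemma beta_real_axis: "beta_real i0 (axis a 1) (axis b 1) = (if a = b then sgr i0 a else 0)"
proof -
  have "(\<Sum>k\<in>UNIV. sgr i0 k * axis a 1 $ k * axis b 1 $ k) = (\<Sum>k\<in>UNIV. if k = a then (if a = b then sgr i0 a else 0) else 0)"
    by (rule sum.cong) (auto simp: axis_def)
  then show ?thesis by (simp add: beta_real_alt)
qed

lemma Q_cmat: "Qc i0 (cmat g) a b = of_real (beta_real i0 (g *v axis a 1) (g *v axis b 1))"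
  unfolding Qc_def beta_real_alt mv_axis of_real_sum
  by (rule sum.cong) (auto simp: cmat_def sg_def sgr_def)

lemma cmat_GC: assumes "g \<in> SOR i0" shows "cmat g \<in> GC i0"
proof -
  have "Qc i0 (cmat g) a b = (if a = b then sg i0 a else 0)" for a b
    using assms by (simp add: Q_cmat SOR_def beta_real_axis sgr_def sg_def)
  then show ?thesis using assms by (simp add: GC_def det_cmat SOR_def Qpres)
qed



lemma SOR_mult: "g \<in> SOR i0 \<Longrightarrow> h \<in> SOR i0 \<Longrightarrow> g ** h \<in> SOR i0"
  by (simp add: SOR_def det_mul matrix_vector_mul_assoc[symmetric])

lemma SOR_one: "mat 1 \<in> SOR i0"
  by (simp add: SOR_def)

lemma SOR_inv: assumes "g \<in> SOR i0" shows "matrix_inv g \<in> SOR i0"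
proof -
  have dg: "det g \<noteq> 0" using assms by (simp add: SOR_def)
  note p = inv_props[OF dg]
  have "det g * det (matrix_inv g) = 1" using p(1) by (metis det_I det_mul)
  then have d: "det (matrix_inv g) = 1" using assms by (simp add: SOR_def)
  have "beta_real i0 (matrix_inv g *v z) (matrix_inv g *v w) = beta_real i0 z w" for z w
  proof -
    have "beta_real i0 (matrix_inv g *v z) (matrix_inv g *v w) = beta_real i0 (g *v (matrix_inv g *v z)) (g *v (matrix_inv g *v w))"
      using assms by (simp add: SOR_def)
    also have "\<dots> = beta_real i0 z w" by (simp add: matrix_vector_mul_assoc p)
    finally show ?thesis .
  qed
  then show ?thesis using d by (simp add: SOR_def)
qed

definition phi :: "'n::finite \<Rightarrow> real^'n^'n \<Rightarrow> real^'n^'n" where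
  "phi i0 g = (\<chi> a b. sgr i0 a * sgr i0 b * g$b$a)"

lemma phi_left: assumes "g \<in> SOR i0" shows "phi i0 g ** g = mat 1"
proof -
  have "(phi i0 g ** g) $ a $ b = mat 1 $ a $ b" for a b
  proof -
    have "(phi i0 g ** g) $ a $ b = sgr i0 a * beta_real i0 (g *v axis a 1) (g *v axis b 1)"
      by (simp add: phi_def matrix_matrix_mult_def beta_real_alt mv_axis sum_distrib_left mult_ac)
    also have "\<dots> = sgr i0 a * (if a = b then sgr i0 a else 0)"
      using assms by (simp add: SOR_def beta_real_axis)
    also have "\<dots> = mat 1 $ a $ b" by (simp add: mat_def sgr_def)
    finally show ?thesis .
  qed
  then show ?thesis by (simp add: vec_eq_iff)
qed

lemma phi_inv: "g \<in> SOR i0 \<Longrightarrow> matrix_inv g = phi i0 g"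
  by (rule inv_unique_left) (rule phi_left)

lemma phi_one: "phi i0 (mat 1) = mat 1"
  by (simp add: vec_eq_iff phi_def mat_def sgr_def)

lemma phi_cont: "continuous_on S (phi i0)"
  unfolding phi_def by (intro continuous_intros)

lemma comp_map:
  fixes f :: "real^'n::finite^'n \<Rightarrow> real^'n^'n"
  assumes c: "continuous_on (SOR i0) f" and s: "\<And>g. g \<in> SOR i0 \<Longrightarrow> f g \<in> SOR i0"
    and o: "f (mat 1) = mat 1" and g: "g \<in> connected_component_set (SOR i0) (mat 1)"
  shows "f g \<in> connected_component_set (SOR i0) (mat 1)"
proof -
  let ?C = "connected_component_set (SOR i0) (mat 1)"
  have sub: "?C \<subseteq> SOR i0" by (rule connected_component_subset)
  have "f ` ?C \<subseteq> ?C"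
  proof (rule connected_component_maximal)
    show "mat 1 \<in> f ` ?C"
      using o SOR_one[of i0] by (metis connected_component_refl image_eqI mem_Collect_eq)
    show "connected (f ` ?C)"
      by (rule connected_continuous_image) (use continuous_on_subset[OF c sub] in auto)
    show "f ` ?C \<subseteq> SOR i0" using sub s by auto
  qed
  then show ?thesis using g by auto
qed

definition cr :: "'n::finite \<Rightarrow> 'n \<Rightarrow> real^'n^'n" where
  "cr i0 i1 = (\<chi> a b. if a = b then (if a \<in> {i0,i1} then -1 else 1) else 0)"

lemma prod_split2:
  fixes f :: "'n::finite \<Rightarrow> real"
  assumes "i0 \<noteq> i1"
  shows "(\<Prod>k\<in>UNIV. f k) = f i0 * f i1 * (\<Prod>k\<in>UNIV-{i0,i1}. f k)"
proof -
  have "(\<Prod>k\<in>UNIV. f k) = (\<Prod>k\<in>{i0,i1}. f k) * (\<Prod>k\<in>UNIV-{i0,i1}. f k)"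
    using prod.subset_diff[of "{i0,i1}" UNIV f] by (simp add: mult.commute)
  then show ?thesis using assms by simp
qed

lemma cr_mv: "(cr i0 i1 *v z) $ k = (if k \<in> {i0,i1} then -1 else 1) * z $ k"
proof -
  have "(\<Sum>j\<in>UNIV. cr i0 i1 $ k $ j * z $ j) = (\<Sum>j\<in>UNIV. if j = k then (if k \<in> {i0,i1} then -1 else 1) * z $ k else 0)"
    by (rule sum.cong) (auto simp: cr_def)
  then show ?thesis by (simp add: matrix_vector_mult_def)
qed

lemma cr_SOR: assumes n: "i0 \<noteq> i1" shows "cr i0 i1 \<in> SOR i0"
proof -
  have "det (cr i0 i1) = (\<Prod>k\<in>UNIV. cr i0 i1 $ k $ k)"
    by (rule det_diagonal) (simp add: cr_def)
  also have "\<dots> = 1"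
  proof -
    have "(\<Prod>k\<in>UNIV-{i0,i1}. cr i0 i1 $ k $ k) = 1"
      by (rule prod.neutral) (auto simp: cr_def)
    then show ?thesis using n by (simp add: prod_split2[OF n] cr_def)
  qed
  finally have d: "det (cr i0 i1) = 1" .
  have "beta_real i0 (cr i0 i1 *v z) (cr i0 i1 *v w) = beta_real i0 z w" for z w
    unfolding beta_real_alt cr_mv by (rule sum.cong) auto
  with d show ?thesis by (simp add: SOR_def)
qed

lemma cr_cr: "cr i0 i1 ** cr i0 i1 = mat 1"
proof -
  have "(cr i0 i1 ** cr i0 i1) $ a $ b = mat 1 $ a $ b" for a b
  proof -
    have "(\<Sum>k\<in>UNIV. cr i0 i1 $ a $ k * cr i0 i1 $ k $ b) = (\<Sum>k\<in>UNIV. if k = a then (if a = b then 1 else 0) else 0)"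
      by (rule sum.cong) (auto simp: cr_def)
    then show ?thesis by (simp add: matrix_matrix_mult_def mat_def)
  qed
  then show ?thesis by (simp add: vec_eq_iff)
qed

lemma crconj_cont: "continuous_on S (\<lambda>g. cr i0 i1 ** g ** cr i0 i1)"
  unfolding matrix_matrix_mult_def by (intro continuous_intros)

lemma Greal_GC: "g \<in> Greal i0 \<Longrightarrow> g \<in> GC i0"
  unfolding Greal_def using connected_component_subset cmat_GC by blast

lemma Greal_mcnj: "g \<in> Greal i0 \<Longrightarrow> mcnj g = g"
  unfolding Greal_def using mcnj_cmat by blast

lemma Greal_inv: assumes "g \<in> Greal i0" shows "matrix_inv g \<in> Greal i0"
proof -
  obtain g0 where g0: "g0 \<in> connected_component_set (SOR i0) (mat 1)" and g: "g = cmat g0"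
    using assms unfolding Greal_def by blast
  have s: "g0 \<in> SOR i0" using g0 connected_component_subset by blast
  have "matrix_inv g = cmat (phi i0 g0)"
    unfolding g by (rule inv_unique_left) (simp add: cmat_mult[symmetric] phi_left[OF s] cmat_one)
  moreover have "phi i0 g0 \<in> connected_component_set (SOR i0) (mat 1)"
    by (rule comp_map[OF phi_cont _ phi_one g0]) (metis SOR_inv phi_inv)
  ultimately show ?thesis unfolding Greal_def by blast
qed

lemma Greal_cr: assumes n: "i0 \<noteq> i1" and "g \<in> Greal i0"
  shows "cmat (cr i0 i1) ** g ** cmat (cr i0 i1) \<in> Greal i0"
proof -
  obtain g0 where g0: "g0 \<in> connected_component_set (SOR i0) (mat 1)" and g: "g = cmat g0"
    using assms unfolding Greal_def by blast
  have "cr i0 i1 ** g0 ** cr i0 i1 \<in> connected_component_set (SOR i0) (mat 1)"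
    by (rule comp_map[OF crconj_cont _ _ g0]) (auto simp: SOR_mult cr_SOR[OF n] cr_cr)
  then show ?thesis unfolding Greal_def g cmat_mult[symmetric] by blast
qed

lemma Mx_pi: assumes n: "i0 \<noteq> i1"
  shows "Mx i0 i1 (complex_of_real pi * \<i>) = cmat (cr i0 i1)"
    "Mx i0 i1 (- (complex_of_real pi * \<i>)) = cmat (cr i0 i1)"
  using n by (auto simp: Mx_def FF_def cmat_def cr_def vec_eq_iff exp_pi exp_mpi)



lemma ax_eq: "(v::complex^'n) = w \<longleftrightarrow> (\<forall>k. v $ k = w $ k)" by (simp add: vec_eq_iff)

lemma e_ax:
  assumes n: "i0 \<noteq> i1"
  shows "Mx i0 i1 (pi * \<i> / 2) *v axis i0 1 = \<i> *s axis i1 1"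
    "Mx i0 i1 (pi * \<i> / 2) *v axis i1 1 = \<i> *s axis i0 1"
    "Mx i0 i1 (- (pi * \<i> / 2)) *v axis i0 1 = (-\<i>) *s axis i1 1"
    "Mx i0 i1 (- (pi * \<i> / 2)) *v axis i1 1 = (-\<i>) *s axis i0 1"
    "cmat (cr i0 i1) *v axis i0 1 = (-1) *s axis i0 1"
    "cmat (cr i0 i1) *v axis i1 1 = (-1) *s axis i1 1"
  unfolding ax_eq mv_axis using n by (auto simp: Mx_def FF_def exp_pih exp_mpih axis_def cmat_def cr_def)

lemma sm_cancel: "(a::complex) * b = 1 \<Longrightarrow> a *s (b *s v) = v"
  by (simp add: vector_smult_assoc)

lemma HC_GC: "h \<in> HC i0 i1 \<Longrightarrow> h \<in> GC i0" by (simp add: HC_def)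
lemma KC_GC: "h \<in> KC i0 \<Longrightarrow> h \<in> GC i0" by (simp add: KC_def)

lemma conj_fix:
  assumes "A \<in> GC i0" "B \<in> GC i0" "C \<in> GC i0"
    and "C *v u = p *s v" "B *v v = v" "A *v v' = q *s u" "v' = v" "q * p = 1"
  shows "(A ** B ** C) *v u = u"
proof -
  have "(A ** B ** C) *v u = A *v (B *v (C *v u))" by (simp add: matrix_vector_mul_assoc matrix_mul_assoc)
  also have "\<dots> = u" using assms by (simp add: vector_scalar_commute vector_smult_assoc mult.commute)
  finally show ?thesis .
qed

lemma KH:
  assumes n: "i0 \<noteq> i1"
  shows "k \<in> KC i0 \<Longrightarrow> Mx i0 i1 (pi * \<i> / 2) ** k ** Mx i0 i1 (- (pi * \<i> / 2)) \<in> HC i0 i1"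
    "k \<in> KC i0 \<Longrightarrow> Mx i0 i1 (- (pi * \<i> / 2)) ** k ** Mx i0 i1 (pi * \<i> / 2) \<in> HC i0 i1"
    "h \<in> HC i0 i1 \<Longrightarrow> Mx i0 i1 (- (pi * \<i> / 2)) ** h ** Mx i0 i1 (pi * \<i> / 2) \<in> KC i0"
    "h \<in> HC i0 i1 \<Longrightarrow> Mx i0 i1 (pi * \<i> / 2) ** h ** Mx i0 i1 (- (pi * \<i> / 2)) \<in> KC i0"
    "h \<in> HC i0 i1 \<Longrightarrow> cmat (cr i0 i1) ** h ** cmat (cr i0 i1) \<in> HC i0 i1"
    "k \<in> KC i0 \<Longrightarrow> cmat (cr i0 i1) ** k ** cmat (cr i0 i1) \<in> KC i0"
proof -
  note G = Mx_GC[OF n] cmat_GC[OF cr_SOR[OF n]]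
  note E = e_ax[OF n]
  show "k \<in> KC i0 \<Longrightarrow> Mx i0 i1 (pi * \<i> / 2) ** k ** Mx i0 i1 (- (pi * \<i> / 2)) \<in> HC i0 i1"
    unfolding KC_def HC_def using G E
    by (auto simp: GC_mult intro!: conj_fix[where p = "-\<i>" and q = \<i>])
  show "k \<in> KC i0 \<Longrightarrow> Mx i0 i1 (- (pi * \<i> / 2)) ** k ** Mx i0 i1 (pi * \<i> / 2) \<in> HC i0 i1"
    unfolding KC_def HC_def using G E
    by (auto simp: GC_mult intro!: conj_fix[where p = "\<i>" and q = "-\<i>"])
  show "h \<in> HC i0 i1 \<Longrightarrow> Mx i0 i1 (- (pi * \<i> / 2)) ** h ** Mx i0 i1 (pi * \<i> / 2) \<in> KC i0"
    unfolding KC_def HC_def using G E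
    by (auto simp: GC_mult intro!: conj_fix[where p = "\<i>" and q = "-\<i>"])
  show "h \<in> HC i0 i1 \<Longrightarrow> Mx i0 i1 (pi * \<i> / 2) ** h ** Mx i0 i1 (- (pi * \<i> / 2)) \<in> KC i0"
    unfolding KC_def HC_def using G E
    by (auto simp: GC_mult intro!: conj_fix[where p = "-\<i>" and q = "\<i>"])
  show "h \<in> HC i0 i1 \<Longrightarrow> cmat (cr i0 i1) ** h ** cmat (cr i0 i1) \<in> HC i0 i1"
    unfolding KC_def HC_def using G E
    by (auto simp: GC_mult intro!: conj_fix[where p = "-1" and q = "-1"])
  show "k \<in> KC i0 \<Longrightarrow> cmat (cr i0 i1) ** k ** cmat (cr i0 i1) \<in> KC i0"
    unfolding KC_def HC_def using G E
    by (auto simp: GC_mult intro!: conj_fix[where p = "-1" and q = "-1"])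
qed

lemma setmul5: "x \<in> A \<cdot>\<cdot> B \<cdot>\<cdot> C \<cdot>\<cdot> D \<cdot>\<cdot> E \<longleftrightarrow>
   (\<exists>a b c d e. a \<in> A \<and> b \<in> B \<and> c \<in> C \<and> d \<in> D \<and> e \<in> E \<and> x = a ** b ** c ** d ** e)"
  unfolding setmul_def by blast

lemma setmul3: "x \<in> A \<cdot>\<cdot> B \<cdot>\<cdot> C \<longleftrightarrow> (\<exists>a b c. a \<in> A \<and> b \<in> B \<and> c \<in> C \<and> x = a ** b ** c)"
  unfolding setmul_def by blast

lemma Mx_assoc: "i0 \<noteq> i1 \<Longrightarrow> Mx i0 i1 a ** (Mx i0 i1 b ** X) = Mx i0 i1 (a + b) ** X"
  by (simp add: matrix_mul_assoc Mx_mult)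

lemma Mx_0': "i0 \<noteq> i1 \<Longrightarrow> Mx i0 i1 0 ** X = X"
  by (simp add: Mx_0)

lemma GC_inv_r: "g \<in> GC i0 \<Longrightarrow> g ** (matrix_inv g ** X) = X"
  by (simp add: matrix_mul_assoc GC_inv_props)

lemma cr_assoc: "cmat (cr i0 i1) ** (cmat (cr i0 i1) ** X) = X"
  by (simp add: matrix_mul_assoc cmat_mult[symmetric] cr_cr cmat_one)

lemma cr_comm: "i0 \<noteq> i1 \<Longrightarrow> cmat (cr i0 i1) ** (Mx i0 i1 w ** X) = Mx i0 i1 w ** (cmat (cr i0 i1) ** X)"
  by (simp add: Mx_pi(1)[symmetric] Mx_assoc add.commute)



lemma expS_Mx: "i0 \<noteq> i1 \<Longrightarrow> expS i0 i1 S = {Mx i0 i1 z | z. z \<in> S}"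
  by (simp add: expS_def mexp_Mx)

lemma XiA_Mx: "i0 \<noteq> i1 \<Longrightarrow> XiA i0 i1 = {Mx i0 i1 z | z. \<bar>Im z\<bar> < pi / 2}"
  by (simp add: XiA_def mexp_Mx)

lemma im_shift1: "z1 \<in> Spi \<Longrightarrow> \<bar>Im (z1 - pi * \<i> / 2)\<bar> < pi/2"
proof -
  assume "z1 \<in> Spi"
  then have a: "0 < Im z1" "Im z1 < pi" by (auto simp: Spi_def)
  have "Im (z1 - pi * \<i> / 2) = Im z1 - pi/2" by simp
  then show ?thesis using a unfolding abs_less_iff by linarith
qed
lemma im_shift2: "\<bar>Im z1\<bar> < pi/2 \<Longrightarrow> pi * \<i> / 2 + z1 \<in> Spi"
proof -
  assume "\<bar>Im z1\<bar> < pi/2"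
  then have a: "- (pi/2) < Im z1" "Im z1 < pi/2" unfolding abs_less_iff by auto
  have "Im (pi * \<i> / 2 + z1) = Im z1 + pi/2" by simp
  then show ?thesis using a unfolding Spi_def by auto
qed

lemma mem5I: "a \<in> A \<Longrightarrow> b \<in> B \<Longrightarrow> c \<in> C \<Longrightarrow> d \<in> D \<Longrightarrow> e \<in> E \<Longrightarrow>
  a ** b ** c ** d ** e \<in> A \<cdot>\<cdot> B \<cdot>\<cdot> C \<cdot>\<cdot> D \<cdot>\<cdot> E"
  unfolding setmul5 by blast

lemma mem3I: "a \<in> A \<Longrightarrow> b \<in> B \<Longrightarrow> c \<in> C \<Longrightarrow> a ** b ** c \<in> A \<cdot>\<cdot> B \<cdot>\<cdot> C"
  unfolding setmul3 by blast

lemma expS_I: "i0 \<noteq> i1 \<Longrightarrow> z \<in> S \<Longrightarrow> Mx i0 i1 z \<in> expS i0 i1 S"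
  unfolding expS_Mx by blast

lemma XiA_I: "i0 \<noteq> i1 \<Longrightarrow> \<bar>Im z\<bar> < pi/2 \<Longrightarrow> Mx i0 i1 z \<in> XiA i0 i1"
  unfolding XiA_Mx by blast

lemma Ghol_T:
  assumes n: "i0 \<noteq> i1"
  shows "Ghol i0 i1 = HC i0 i1 \<cdot>\<cdot> expS i0 i1 Spi \<cdot>\<cdot> Greal i0 \<cdot>\<cdot> expS i0 i1 Spi \<cdot>\<cdot> HC i0 i1"
proof (rule set_eqI)
  fix x
  let ?e = "Mx i0 i1 (pi * \<i> / 2)" and ?e' = "Mx i0 i1 (- (pi * \<i> / 2))"
  note A = matrix_mul_assoc[symmetric] Mx_assoc[OF n] Mx_mult[OF n]
  show "x \<in> Ghol i0 i1 \<longleftrightarrow> x \<in> HC i0 i1 \<cdot>\<cdot> expS i0 i1 Spi \<cdot>\<cdot> Greal i0 \<cdot>\<cdot> expS i0 i1 Spi \<cdot>\<cdot> HC i0 i1"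
  proof
    assume "x \<in> Ghol i0 i1"
    then obtain k1 z1 g z2 k2 where k1: "k1 \<in> KC i0" and z1: "\<bar>Im z1\<bar> < pi/2" and g: "g \<in> Greal i0"
      and z2: "\<bar>Im z2\<bar> < pi/2" and k2: "k2 \<in> KC i0"
      and x: "x = ?e ** (k1 ** Mx i0 i1 z1 ** g ** Mx i0 i1 z2 ** k2) ** ?e"
      unfolding Ghol_def Gcut_def setmul3 setmul5 mexp_Mx[OF n] XiA_Mx[OF n] by blast
    have "x = (?e ** k1 ** ?e') ** Mx i0 i1 (pi * \<i> / 2 + z1) ** g ** Mx i0 i1 (z2 + pi * \<i> / 2) ** (?e' ** k2 ** ?e)"
      unfolding x by (simp add: A)
    moreover have "pi * \<i> / 2 + z1 \<in> Spi" "z2 + pi * \<i> / 2 \<in> Spi"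
      using im_shift2[OF z1] im_shift2[OF z2] by (simp_all only: add.commute[of z2])
    ultimately show "x \<in> HC i0 i1 \<cdot>\<cdot> expS i0 i1 Spi \<cdot>\<cdot> Greal i0 \<cdot>\<cdot> expS i0 i1 Spi \<cdot>\<cdot> HC i0 i1"
      using KH(1)[OF n k1] KH(2)[OF n k2] g by (simp only:) (intro mem5I expS_I n)
  next
    assume "x \<in> HC i0 i1 \<cdot>\<cdot> expS i0 i1 Spi \<cdot>\<cdot> Greal i0 \<cdot>\<cdot> expS i0 i1 Spi \<cdot>\<cdot> HC i0 i1"
    then obtain h1 z1 g z2 h2 where h1: "h1 \<in> HC i0 i1" and z1: "z1 \<in> Spi" and g: "g \<in> Greal i0"
      and z2: "z2 \<in> Spi" and h2: "h2 \<in> HC i0 i1"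
      and x: "x = h1 ** Mx i0 i1 z1 ** g ** Mx i0 i1 z2 ** h2"
      unfolding setmul5 expS_Mx[OF n] by blast
    have "x = ?e ** ((?e' ** h1 ** ?e) ** Mx i0 i1 (z1 - pi * \<i> / 2) ** g ** Mx i0 i1 (z2 - pi * \<i> / 2) ** (?e ** h2 ** ?e')) ** ?e"
      unfolding x by (simp add: A Mx_0'[OF n] Mx_0[OF n])
    moreover have "\<bar>Im (z1 - pi * \<i> / 2)\<bar> < pi/2" "\<bar>Im (z2 - pi * \<i> / 2)\<bar> < pi/2"
      using im_shift1[OF z1] im_shift1[OF z2] by blast+
    ultimately show "x \<in> Ghol i0 i1"
      unfolding Ghol_def Gcut_def mexp_Mx[OF n]
      using KH(3)[OF n h1] KH(4)[OF n h2] g by (simp only:) (intro mem5I mem3I XiA_I n singletonI)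
  qed
qed



lemma shift_m: "z \<in> Spi \<Longrightarrow> z - pi * \<i> \<in> uminus ` Spi"
proof -
  assume z: "z \<in> Spi"
  have "pi * \<i> - z \<in> Spi" using z by (simp add: Spi_def)
  then show ?thesis by (rule rev_image_eqI) simp
qed

lemma shift_p: "w \<in> uminus ` Spi \<Longrightarrow> w + pi * \<i> \<in> Spi"
  by (auto simp: Spi_def)

lemma neg_m: "z \<in> Spi \<Longrightarrow> - z \<in> uminus ` Spi" by blast

lemma cnj_m: "z \<in> Spi \<Longrightarrow> cnj z \<in> uminus ` Spi"
proof -
  assume z: "z \<in> Spi"
  have "- cnj z \<in> Spi" using z by (simp add: Spi_def)
  then show ?thesis by (rule rev_image_eqI) simp
qed

lemma T_eq:
  assumes n: "i0 \<noteq> i1"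
  shows "HC i0 i1 \<cdot>\<cdot> expS i0 i1 Spi \<cdot>\<cdot> Greal i0 \<cdot>\<cdot> expS i0 i1 Spi \<cdot>\<cdot> HC i0 i1
       = HC i0 i1 \<cdot>\<cdot> expS i0 i1 (uminus ` Spi) \<cdot>\<cdot> Greal i0 \<cdot>\<cdot> expS i0 i1 (uminus ` Spi) \<cdot>\<cdot> HC i0 i1"
proof (rule set_eqI, rule iffI)
  fix x
  note A = matrix_mul_assoc[symmetric] Mx_assoc[OF n] Mx_mult[OF n]
  assume "x \<in> HC i0 i1 \<cdot>\<cdot> expS i0 i1 Spi \<cdot>\<cdot> Greal i0 \<cdot>\<cdot> expS i0 i1 Spi \<cdot>\<cdot> HC i0 i1"
  then obtain h1 z1 g z2 h2 where h1: "h1 \<in> HC i0 i1" and z1: "z1 \<in> Spi" and g: "g \<in> Greal i0"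
      and z2: "z2 \<in> Spi" and h2: "h2 \<in> HC i0 i1"
      and x: "x = h1 ** Mx i0 i1 z1 ** g ** Mx i0 i1 z2 ** h2"
      unfolding setmul5 expS_Mx[OF n] by blast
  have "x = h1 ** Mx i0 i1 (z1 - pi * \<i>) ** (Mx i0 i1 (pi * \<i>) ** g ** Mx i0 i1 (pi * \<i>))
      ** Mx i0 i1 (z2 - pi * \<i>) ** h2"
    unfolding x by (simp add: A)
  moreover have "Mx i0 i1 (pi * \<i>) ** g ** Mx i0 i1 (pi * \<i>) \<in> Greal i0"
    unfolding Mx_pi(1)[OF n] by (rule Greal_cr[OF n g])
  ultimately show "x \<in> HC i0 i1 \<cdot>\<cdot> expS i0 i1 (uminus ` Spi) \<cdot>\<cdot> Greal i0 \<cdot>\<cdot> expS i0 i1 (uminus ` Spi) \<cdot>\<cdot> HC i0 i1"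
    using h1 h2 shift_m[OF z1] shift_m[OF z2] by (simp only:) (intro mem5I expS_I n)
next
  fix x
  note A = matrix_mul_assoc[symmetric] Mx_assoc[OF n] Mx_mult[OF n]
  assume "x \<in> HC i0 i1 \<cdot>\<cdot> expS i0 i1 (uminus ` Spi) \<cdot>\<cdot> Greal i0 \<cdot>\<cdot> expS i0 i1 (uminus ` Spi) \<cdot>\<cdot> HC i0 i1"
  then obtain h1 z1 g z2 h2 where h1: "h1 \<in> HC i0 i1" and z1: "z1 \<in> uminus ` Spi" and g: "g \<in> Greal i0"
      and z2: "z2 \<in> uminus ` Spi" and h2: "h2 \<in> HC i0 i1"
      and x: "x = h1 ** Mx i0 i1 z1 ** g ** Mx i0 i1 z2 ** h2"
      unfolding setmul5 expS_Mx[OF n] by blast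
  have "x = h1 ** Mx i0 i1 (z1 + pi * \<i>) ** (Mx i0 i1 (- (pi * \<i>)) ** g ** Mx i0 i1 (- (pi * \<i>)))
      ** Mx i0 i1 (z2 + pi * \<i>) ** h2"
    unfolding x by (simp add: A)
  moreover have "Mx i0 i1 (- (pi * \<i>)) ** g ** Mx i0 i1 (- (pi * \<i>)) \<in> Greal i0"
    unfolding Mx_pi(2)[OF n] by (rule Greal_cr[OF n g])
  ultimately show "x \<in> HC i0 i1 \<cdot>\<cdot> expS i0 i1 Spi \<cdot>\<cdot> Greal i0 \<cdot>\<cdot> expS i0 i1 Spi \<cdot>\<cdot> HC i0 i1"
    using h1 h2 shift_p[OF z1] shift_p[OF z2] by (simp only:) (intro mem5I expS_I n)
qed

lemma HC_mcnj: "h \<in> HC i0 i1 \<Longrightarrow> mcnj h \<in> HC i0 i1"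
  by (simp add: HC_def GC_mcnj mcnj_axis)

lemma HC_inv: assumes "h \<in> HC i0 i1" shows "matrix_inv h \<in> HC i0 i1"
proof -
  have G: "h \<in> GC i0" and a: "h *v axis i1 1 = axis i1 1" using assms by (auto simp: HC_def)
  have "matrix_inv h *v axis i1 1 = matrix_inv h *v (h *v axis i1 1)" by (simp add: a)
  also have "\<dots> = axis i1 1" by (simp add: matrix_vector_mul_assoc GC_inv_props[OF G])
  finally show ?thesis using GC_inv[OF G] by (simp add: HC_def)
qed

lemma mcnj_Mx: "mcnj (Mx i0 i1 z) = Mx i0 i1 (cnj z)"
  by (simp add: vec_eq_iff mcnj_def Mx_def FF_def exp_cnj)

lemma T_GC:
  assumes n: "i0 \<noteq> i1" and x: "x \<in> HC i0 i1 \<cdot>\<cdot> expS i0 i1 Spi \<cdot>\<cdot> Greal i0 \<cdot>\<cdot> expS i0 i1 Spi \<cdot>\<cdot> HC i0 i1"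
  shows "x \<in> GC i0"
proof -
  obtain h1 z1 g z2 h2 where h1: "h1 \<in> HC i0 i1" and g: "g \<in> Greal i0"
      and h2: "h2 \<in> HC i0 i1"
      and x: "x = h1 ** Mx i0 i1 z1 ** g ** Mx i0 i1 z2 ** h2"
      using x unfolding setmul5 expS_Mx[OF n] by blast
  show ?thesis unfolding x
    by (intro GC_mult HC_GC[OF h1] Mx_GC[OF n] Greal_GC[OF g] HC_GC[OF h2])
qed

lemma T_mcnj:
  assumes n: "i0 \<noteq> i1" and "x \<in> HC i0 i1 \<cdot>\<cdot> expS i0 i1 Spi \<cdot>\<cdot> Greal i0 \<cdot>\<cdot> expS i0 i1 Spi \<cdot>\<cdot> HC i0 i1"
  shows "mcnj x \<in> HC i0 i1 \<cdot>\<cdot> expS i0 i1 (uminus ` Spi) \<cdot>\<cdot> Greal i0 \<cdot>\<cdot> expS i0 i1 (uminus ` Spi) \<cdot>\<cdot> HC i0 i1"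
proof -
  obtain h1 z1 g z2 h2 where h1: "h1 \<in> HC i0 i1" and z1: "z1 \<in> Spi" and g: "g \<in> Greal i0"
      and z2: "z2 \<in> Spi" and h2: "h2 \<in> HC i0 i1"
      and x: "x = h1 ** Mx i0 i1 z1 ** g ** Mx i0 i1 z2 ** h2"
      using assms(2) unfolding setmul5 expS_Mx[OF n] by blast
  have "mcnj x = mcnj h1 ** Mx i0 i1 (cnj z1) ** g ** Mx i0 i1 (cnj z2) ** mcnj h2"
    unfolding x by (simp add: mcnj_mult mcnj_Mx Greal_mcnj[OF g])
  then show ?thesis
    using HC_mcnj[OF h1] HC_mcnj[OF h2] cnj_m[OF z1] cnj_m[OF z2] g
    by (simp only:) (intro mem5I expS_I n)
qed

lemma T_inv:
  assumes n: "i0 \<noteq> i1" and "x \<in> HC i0 i1 \<cdot>\<cdot> expS i0 i1 Spi \<cdot>\<cdot> Greal i0 \<cdot>\<cdot> expS i0 i1 Spi \<cdot>\<cdot> HC i0 i1"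
  shows "matrix_inv x \<in> HC i0 i1 \<cdot>\<cdot> expS i0 i1 (uminus ` Spi) \<cdot>\<cdot> Greal i0 \<cdot>\<cdot> expS i0 i1 (uminus ` Spi) \<cdot>\<cdot> HC i0 i1"
proof -
  obtain h1 z1 g z2 h2 where h1: "h1 \<in> HC i0 i1" and z1: "z1 \<in> Spi" and g: "g \<in> Greal i0"
      and z2: "z2 \<in> Spi" and h2: "h2 \<in> HC i0 i1"
      and x: "x = h1 ** Mx i0 i1 z1 ** g ** Mx i0 i1 z2 ** h2"
      using assms(2) unfolding setmul5 expS_Mx[OF n] by blast
  note A = matrix_mul_assoc[symmetric] Mx_assoc[OF n] Mx_mult[OF n] Mx_0'[OF n] Mx_0[OF n]
  have "x ** (matrix_inv h2 ** Mx i0 i1 (- z2) ** matrix_inv g ** Mx i0 i1 (- z1) ** matrix_inv h1) = mat 1"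
    unfolding x using HC_GC[OF h1] HC_GC[OF h2] Greal_GC[OF g]
    by (simp add: A GC_inv_r GC_inv_props)
  then have "matrix_inv x = matrix_inv h2 ** Mx i0 i1 (- z2) ** matrix_inv g ** Mx i0 i1 (- z1) ** matrix_inv h1"
    by (rule inv_unique)
  then show ?thesis
    using HC_inv[OF h1] HC_inv[OF h2] neg_m[OF z1] neg_m[OF z2] Greal_inv[OF g]
    by (simp only:) (intro mem5I expS_I n)
qed

lemma T_conj:
  assumes n: "i0 \<noteq> i1" and "x \<in> HC i0 i1 \<cdot>\<cdot> expS i0 i1 Spi \<cdot>\<cdot> Greal i0 \<cdot>\<cdot> expS i0 i1 Spi \<cdot>\<cdot> HC i0 i1"
  shows "cmat (cr i0 i1) ** x ** cmat (cr i0 i1) \<in> HC i0 i1 \<cdot>\<cdot> expS i0 i1 Spi \<cdot>\<cdot> Greal i0 \<cdot>\<cdot> expS i0 i1 Spi \<cdot>\<cdot> HC i0 i1"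
proof -
  obtain h1 z1 g z2 h2 where h1: "h1 \<in> HC i0 i1" and z1: "z1 \<in> Spi" and g: "g \<in> Greal i0"
      and z2: "z2 \<in> Spi" and h2: "h2 \<in> HC i0 i1"
      and x: "x = h1 ** Mx i0 i1 z1 ** g ** Mx i0 i1 z2 ** h2"
      using assms(2) unfolding setmul5 expS_Mx[OF n] by blast
  let ?c = "cmat (cr i0 i1)"
  have "?c ** x ** ?c = (?c ** h1 ** ?c) ** Mx i0 i1 z1 ** (?c ** g ** ?c) ** Mx i0 i1 z2 ** (?c ** h2 ** ?c)"
    unfolding x by (simp add: matrix_mul_assoc[symmetric] cr_assoc cr_comm[OF n])
  then show ?thesis
    using KH(5)[OF n h1] KH(5)[OF n h2] z1 z2 Greal_cr[OF n g]
    by (simp only:) (intro mem5I expS_I n)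
qed

lemma mexp_pi:
  assumes n: "i0 \<noteq> i1"
  shows "mexp (smat (pi * \<i>) (hmat i0 i1)) = cmat (cr i0 i1)"
    "mexp (smat (- pi * \<i>) (hmat i0 i1)) = cmat (cr i0 i1)"
  using Mx_pi[OF n] by (simp_all add: mexp_Mx[OF n])


theorem mainTheorem10:
  fixes i0 i1 :: "'n::finite"
  assumes "i0 \<noteq> i1"
  shows "Ghol i0 i1 \<subseteq> GC i0
    \<and> (\<forall>g \<in> Ghol i0 i1. mcnj g \<in> Ghol i0 i1)
    \<and> (\<forall>g \<in> Ghol i0 i1. matrix_inv g \<in> Ghol i0 i1)
    \<and> (\<forall>g \<in> Ghol i0 i1. mexp (smat (pi * \<i>) (hmat i0 i1)) ** g
                            ** mexp (smat (- pi * \<i>) (hmat i0 i1)) \<in> Ghol i0 i1)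
    \<and> Ghol i0 i1 = HC i0 i1 \<cdot>\<cdot> expS i0 i1 Spi \<cdot>\<cdot> Greal i0 \<cdot>\<cdot> expS i0 i1 Spi \<cdot>\<cdot> HC i0 i1
    \<and> Ghol i0 i1 = HC i0 i1 \<cdot>\<cdot> expS i0 i1 (uminus ` Spi) \<cdot>\<cdot> Greal i0
                   \<cdot>\<cdot> expS i0 i1 (uminus ` Spi) \<cdot>\<cdot> HC i0 i1"
proof -
  note n = assms
  note GT = Ghol_T[OF n]
  note TE = T_eq[OF n]
  have 1: "Ghol i0 i1 \<subseteq> GC i0"
    using T_GC[OF n] unfolding GT by blast
  have 2: "\<forall>g \<in> Ghol i0 i1. mcnj g \<in> Ghol i0 i1"
    using T_mcnj[OF n] unfolding GT TE[symmetric] by blast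
  have 3: "\<forall>g \<in> Ghol i0 i1. matrix_inv g \<in> Ghol i0 i1"
    using T_inv[OF n] unfolding GT TE[symmetric] by blast
  have 4: "\<forall>g \<in> Ghol i0 i1. mexp (smat (pi * \<i>) (hmat i0 i1)) ** g
                            ** mexp (smat (- pi * \<i>) (hmat i0 i1)) \<in> Ghol i0 i1"
    unfolding mexp_pi[OF n] using T_conj[OF n] unfolding GT by blast
  show ?thesis using 1 2 3 4 GT TE by simp
qed

end
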